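(* Let $\mathcal{X}=\{\{1,4,5\},\{2,4,5\},\{1,6,7\},\{2,6,7\},\{1,2,3\}\}$ on the ground set $[7]$. Then the uniform matroid $U_{2,7}$ is the unique minimal $\mathcal{X}$-matroid with respect to the dependency order, while $\mathrm{val}_{\mathcal{X}}([7])=3$; in particular $\mathrm{val}_{\mathcal{X}}$ is not the rank function of the unique minimal $\mathcal{X}$-matroid.
   Context: An $\mathcal{X}$-matroid is a matroid on $[7]$ in which every member of $\mathcal{X}$ is a circuit. Dependency order: $N_1\le N_2$ iff every dependent set of $N_1$ is dependent in $N_2$. $U_{2,7}$ is the uniform matroid of rank $2$ on $[7]$ (dependent sets are the subsets of size $\ge3$). A proper $\mathcal{X}$-sequence is a sequence $\mathcal{S}=(X_1,\dots,X_k)$ ($k\ge0$) of members of $\mathcal{X}$ with $X_i\not\subseteq\bigcup_{j<i}X_j$ for $i=2,\dots,k$; for $F\subseteq[7]$, $\mathrm{val}(F,\mathcal{S})=|F\cup\bigcup_{i=1}^kX_i|-k$, and $\mathrm{val}_{\mathcal{X}}(F)$ is the minimum of $\mathrm{val}(F,\mathcal{S})$ over all proper $\mathcal{X}$-sequences $\mathcal{S}$. *)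

theory Defs
  imports Main
begin

definition ground7 :: "nat set" where
  "ground7 = {1..7}"

definition is_matroid :: "'a set \<Rightarrow> 'a set set \<Rightarrow> bool" where
  "is_matroid E I \<longleftrightarrow>
     finite E \<and> (\<forall>A\<in>I. A \<subseteq> E) \<and> {} \<in> I \<and>
     (\<forall>A B. B \<in> I \<and> A \<subseteq> B \<longrightarrow> A \<in> I) \<and>
     (\<forall>A B. A \<in> I \<and> B \<in> I \<and> card A < card B \<longrightarrow> (\<exists>x\<in>B - A. insert x A \<in> I))"

definition dependent :: "'a set \<Rightarrow> 'a set set \<Rightarrow> 'a set \<Rightarrow> bool" where
  "dependent E I D \<longleftrightarrow> D \<subseteq> E \<and> D \<notin> I"

definition circuit :: "'a set \<Rightarrow> 'a set set \<Rightarrow> 'a set \<Rightarrow> bool" where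
  "circuit E I C \<longleftrightarrow> dependent E I C \<and> (\<forall>D. D \<subset> C \<longrightarrow> \<not> dependent E I D)"

definition X_matroid :: "nat set set \<Rightarrow> nat set set \<Rightarrow> bool" where
  "X_matroid X I \<longleftrightarrow> is_matroid ground7 I \<and> (\<forall>C\<in>X. circuit ground7 I C)"

definition dep_le :: "nat set set \<Rightarrow> nat set set \<Rightarrow> bool" where
  "dep_le I1 I2 \<longleftrightarrow> (\<forall>D. dependent ground7 I1 D \<longrightarrow> dependent ground7 I2 D)"

definition minimal_X_matroid :: "nat set set \<Rightarrow> nat set set \<Rightarrow> bool" where
  "minimal_X_matroid X I \<longleftrightarrow> X_matroid X I \<and>
     (\<forall>N. X_matroid X N \<and> dep_le N I \<longrightarrow> N = I)"

definition U27 :: "nat set set" where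
  "U27 = {A. A \<subseteq> ground7 \<and> card A \<le> 2}"

definition matroid_rank :: "nat set set \<Rightarrow> nat set \<Rightarrow> nat" where
  "matroid_rank I A = Max {card B | B. B \<in> I \<and> B \<subseteq> A}"

definition proper_seq :: "nat set set \<Rightarrow> nat set list \<Rightarrow> bool" where
  "proper_seq X S \<longleftrightarrow> set S \<subseteq> X \<and>
     (\<forall>i<length S. 0 < i \<longrightarrow> \<not> (S ! i \<subseteq> (\<Union>j<i. S ! j)))"

definition val_seq :: "nat set \<Rightarrow> nat set list \<Rightarrow> int" where
  "val_seq F S = int (card (F \<union> \<Union>(set S))) - int (length S)"

definition val_X :: "nat set set \<Rightarrow> nat set \<Rightarrow> int" where
  "val_X X F = Min {val_seq F S | S. proper_seq X S}"

definition Xex :: "nat set set" where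
  "Xex = {{1,4,5},{2,4,5},{1,6,7},{2,6,7},{1,2,3}}"

end

theory Submission imports Defs begin

lemma Xcases: "x \<in> Xex \<Longrightarrow> (x = {1,4,5} \<Longrightarrow> P) \<Longrightarrow> (x = {2,4,5} \<Longrightarrow> P) \<Longrightarrow> (x = {1,6,7} \<Longrightarrow> P)
  \<Longrightarrow> (x = {2,6,7} \<Longrightarrow> P) \<Longrightarrow> (x = {1,2,3} \<Longrightarrow> P) \<Longrightarrow> P"
  unfolding Xex_def by blast

lemma five: "a \<in> Xex \<Longrightarrow> b \<in> Xex \<Longrightarrow> c \<in> Xex \<Longrightarrow> d \<in> Xex \<Longrightarrow> e \<in> Xex \<Longrightarrow>
  \<not> b \<subseteq> a \<Longrightarrow> \<not> c \<subseteq> a \<union> b \<Longrightarrow> \<not> d \<subseteq> a \<union> b \<union> c \<Longrightarrow> \<not> e \<subseteq> a \<union> b \<union> c \<union> d \<Longrightarrow> False"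
  apply (erule Xcases[of a]; erule Xcases[of b]; simp; erule Xcases[of c]; simp; erule Xcases[of d]; simp; erule Xcases[of e]; simp)
  done

lemma Xex_sub: "C \<in> Xex \<Longrightarrow> C \<subseteq> ground7"
  unfolding Xex_def ground7_def by (elim insertE emptyE; simp)


lemma circ: "X_matroid X N \<Longrightarrow> C \<in> X \<Longrightarrow> circuit ground7 N C"
  unfolding X_matroid_def by simp

lemma circ_dep: assumes "X_matroid X N" "C \<in> X" shows "C \<notin> N"
proof -
  have "circuit ground7 N C" by (rule circ[OF assms])
  then have "dependent ground7 N C" unfolding circuit_def by (elim conjE)
  then show ?thesis unfolding dependent_def by (elim conjE)
qed

lemma circ_sub: assumes "X_matroid X N" "C \<in> X" "D \<subset> C" shows "D \<in> N"
proof -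
  have c: "circuit ground7 N C" by (rule circ[OF assms(1,2)])
  then have "dependent ground7 N C" "\<forall>D. D \<subset> C \<longrightarrow> \<not> dependent ground7 N D" unfolding circuit_def by simp_all
  then have "C \<subseteq> ground7" "\<not> dependent ground7 N D" using assms(3) unfolding dependent_def by simp_all
  then show ?thesis using assms(3) unfolding dependent_def by auto
qed

lemma line:
  assumes M: "is_matroid E N" and ab: "{a,b} \<in> N" "a \<noteq> b"
    and S: "\<forall>c\<in>S. c \<notin> {a,b} \<longrightarrow> insert c {a,b} \<notin> N"
    and T: "T \<subseteq> insert a (insert b S)" "card T = 3"
  shows "T \<notin> N"
proof
  assume TN: "T \<in> N"
  have ex: "\<forall>A B. A \<in> N \<and> B \<in> N \<and> card A < card B \<longrightarrow> (\<exists>x\<in>B - A. insert x A \<in> N)"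
    using M unfolding is_matroid_def by (elim conjE)
  have cd: "card {a,b} < card T" using ab T by simp
  have "\<exists>x\<in>T - {a,b}. insert x {a,b} \<in> N"
    by (rule ex[rule_format]) (intro conjI ab(1) TN cd)
  then obtain x where x1: "x \<in> T" "x \<notin> {a,b}" and x2: "insert x {a,b} \<in> N" by auto
  have "x \<in> S" using T(1) x1 by auto
  then have "insert x {a,b} \<notin> N" using S x1(2) by simp
  then show False using x2 by contradiction
qed

lemma psI: "x \<in> B \<Longrightarrow> x \<notin> A \<Longrightarrow> A \<subseteq> B \<Longrightarrow> A \<subset> B" by blast

lemma rank2:
  assumes XN: "X_matroid Xex N" and AN: "A \<in> N"
  shows "A \<in> U27"
proof -
  have M: "is_matroid ground7 N" using XN unfolding X_matroid_def by (elim conjE)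
  have in1: "{1::nat,2,3} \<in> Xex" "{1::nat,4,5} \<in> Xex" "{2::nat,4,5} \<in> Xex" "{1::nat,6,7} \<in> Xex" "{2::nat,6,7} \<in> Xex"
    by (simp_all only: Xex_def insert_iff simp_thms)
  have p12: "{1::nat,2} \<in> N" by (rule circ_sub[OF XN in1(1)]) (rule psI[of 3]; simp)
  have p45: "{4::nat,5} \<in> N" by (rule circ_sub[OF XN in1(2)]) (rule psI[of 1]; simp)
  have p67: "{6::nat,7} \<in> N" by (rule circ_sub[OF XN in1(4)]) (rule psI[of 1]; simp)
  have d: "{1::nat,2,3} \<notin> N" "{1::nat,4,5} \<notin> N" "{2::nat,4,5} \<notin> N" "{1::nat,6,7} \<notin> N" "{2::nat,6,7} \<notin> N"
    using circ_dep[OF XN] in1 by simp_all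
  have s45: "\<forall>c\<in>{1,2}. c \<notin> {4,5} \<longrightarrow> insert c {4::nat,5} \<notin> N" using d by simp
  have s67: "\<forall>c\<in>{1,2}. c \<notin> {6,7} \<longrightarrow> insert c {6::nat,7} \<notin> N" using d by simp
  have e4: "{4::nat,1,2} \<notin> N" by (rule line[OF M p45 _ s45]) auto
  have e5: "{5::nat,1,2} \<notin> N" by (rule line[OF M p45 _ s45]) auto
  have e6: "{6::nat,1,2} \<notin> N" by (rule line[OF M p67 _ s67]) auto
  have e7: "{7::nat,1,2} \<notin> N" by (rule line[OF M p67 _ s67]) auto
  have e3: "{3::nat,1,2} \<notin> N" using d(1) by (simp add: insert_commute)
  have s12: "\<forall>c\<in>ground7. c \<notin> {1, 2} \<longrightarrow> insert c {1::nat, 2} \<notin> N"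
  proof (intro ballI impI)
    fix c assume "c \<in> ground7" "c \<notin> {1::nat,2}"
    then have "c = 3 \<or> c = 4 \<or> c = 5 \<or> c = 6 \<or> c = 7" unfolding ground7_def by auto
    then show "insert c {1, 2} \<notin> N" using e3 e4 e5 e6 e7 by (elim disjE) simp_all
  qed
  have all: "T \<notin> N" if "T \<subseteq> ground7" "card T = 3" for T
    by (rule line[OF M p12 _ s12 _ that(2)]) (use that in auto)
  have sub: "\<forall>A\<in>N. A \<subseteq> ground7" using M unfolding is_matroid_def by (elim conjE)
  have Ag: "A \<subseteq> ground7" using sub AN by blast
  have "card A \<le> 2"
  proof (rule ccontr)
    assume "\<not> card A \<le> 2"
    then have "3 \<le> card A" by simp
    then obtain T where T: "T \<subseteq> A" "card T = 3" by (rule obtain_subset_with_card_n)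
    have her: "\<forall>A B. B \<in> N \<and> A \<subseteq> B \<longrightarrow> A \<in> N" using M unfolding is_matroid_def by (elim conjE)
    have "T \<in> N" using her AN T(1) by blast
    moreover have "T \<subseteq> ground7" using T(1) Ag by blast
    ultimately show False using all T(2) by blast
  qed
  then show ?thesis using Ag unfolding U27_def by simp
qed
lemma finite_ground: "finite ground7" unfolding ground7_def by simp
lemma card_ground: "card ground7 = 7" unfolding ground7_def by simp

lemma U27_fin: "A \<in> U27 \<Longrightarrow> finite A"
  unfolding U27_def using finite_ground finite_subset by auto

lemma U27_matroid: "is_matroid ground7 U27"
  unfolding is_matroid_def
proof (intro conjI allI impI ballI)
  show "finite ground7" by (rule finite_ground)
  show "A \<subseteq> ground7" if "A \<in> U27" for A using that unfolding U27_def by simp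
  show "{} \<in> U27" unfolding U27_def by simp
  show "A \<in> U27" if "B \<in> U27 \<and> A \<subseteq> B" for A B
  proof -
    have B: "B \<in> U27" "A \<subseteq> B" using that by simp_all
    have "finite B" by (rule U27_fin[OF B(1)])
    then have "card A \<le> card B" using B(2) by (rule card_mono)
    moreover have "card B \<le> 2" "B \<subseteq> ground7" using B(1) unfolding U27_def by simp_all
    ultimately show ?thesis using B(2) unfolding U27_def by simp
  qed
  show "\<exists>x\<in>B - A. insert x A \<in> U27" if "A \<in> U27 \<and> B \<in> U27 \<and> card A < card B" for A B
  proof -
    have AB: "A \<in> U27" "B \<in> U27" "card A < card B" using that by simp_all
    have fA: "finite A" by (rule U27_fin[OF AB(1)])
    have "\<not> B \<subseteq> A"
    proof
      assume "B \<subseteq> A" then have "card B \<le> card A" using fA by (rule card_mono[rotated])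
      then show False using AB(3) by simp
    qed
    then obtain x where x: "x \<in> B" "x \<notin> A" by blast
    have cB: "card B \<le> 2" "B \<subseteq> ground7" "A \<subseteq> ground7" using AB unfolding U27_def by simp_all
    have "card (insert x A) = Suc (card A)" using fA x(2) by simp
    then have "card (insert x A) \<le> 2" using AB(3) cB(1) by simp
    moreover have "insert x A \<subseteq> ground7" using cB x(1) by blast
    ultimately have "insert x A \<in> U27" unfolding U27_def by simp
    then show ?thesis using x by blast
  qed
qed

lemma U27_X: "X_matroid Xex U27"
  unfolding X_matroid_def
proof (intro conjI ballI U27_matroid)
  fix C assume C: "C \<in> Xex"
  have cC: "card C = 3" using C unfolding Xex_def by (elim insertE emptyE; simp)
  have Cg: "C \<subseteq> ground7" using Xex_sub[OF C] .
  have fC: "finite C" using Cg finite_ground finite_subset by blast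
  show "circuit ground7 U27 C"
    unfolding circuit_def dependent_def
  proof (intro conjI allI impI Cg)
    show "C \<notin> U27" using cC unfolding U27_def by simp
    fix D assume D: "D \<subset> C"
    have "card D < card C" by (rule psubset_card_mono[OF fC D])
    then have "card D \<le> 2" using cC by simp
    moreover have "D \<subseteq> ground7" using D Cg by blast
    ultimately show "\<not> (D \<subseteq> ground7 \<and> D \<notin> U27)" unfolding U27_def by simp
  qed
qed
lemma X_sub_U27: "X_matroid Xex N \<Longrightarrow> N \<subseteq> U27" using rank2 by blast

lemma UN4: "(\<Union>j<(4::nat). f j) = f 0 \<union> f 1 \<union> f 2 \<union> f 3"
  by (auto simp: numeral_eq_Suc less_Suc_eq)
lemma UN3: "(\<Union>j<(3::nat). f j) = f 0 \<union> f 1 \<union> f 2"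
  by (auto simp: numeral_eq_Suc less_Suc_eq)
lemma UN2: "(\<Union>j<(2::nat). f j) = f 0 \<union> f 1"
  by (auto simp: numeral_eq_Suc less_Suc_eq)
lemma UN1: "(\<Union>j<(1::nat). f j) = f 0"
  by auto

lemma proper_len: assumes P: "proper_seq Xex S" shows "length S \<le> 4"
proof (rule ccontr)
  assume "\<not> length S \<le> 4"
  then have L: "length S \<ge> 5" by simp
  have mem: "S ! i \<in> Xex" if "i < 5" for i using P L that nth_mem[of i S] unfolding proper_seq_def by auto
  have pr: "\<not> (S ! i \<subseteq> (\<Union>j<i. S ! j))" if "0 < i" "i < 5" for i
    using P L that unfolding proper_seq_def by auto
  have q1: "\<not> S!1 \<subseteq> S!0" using pr[of 1] unfolding UN1 by simp
  have q2: "\<not> S!2 \<subseteq> S!0 \<union> S!1" using pr[of 2] unfolding UN2 by simp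
  have q3: "\<not> S!3 \<subseteq> S!0 \<union> S!1 \<union> S!2" using pr[of 3] unfolding UN3 by simp
  have q4: "\<not> S!4 \<subseteq> S!0 \<union> S!1 \<union> S!2 \<union> S!3" using pr[of 4] unfolding UN4 by simp
  show False
    by (rule five[OF mem[of 0] mem[of 1] mem[of 2] mem[of 3] mem[of 4] q1 q2 q3 q4]) simp_all
qed

lemma val_proper: assumes P: "proper_seq Xex S" shows "val_seq ground7 S = 7 - int (length S)"
proof -
  have "\<Union>(set S) \<subseteq> ground7" using P Xex_sub unfolding proper_seq_def by blast
  then have "ground7 \<union> \<Union>(set S) = ground7" by blast
  then show ?thesis unfolding val_seq_def using card_ground by simp
qed

lemma valX: "val_X Xex ground7 = 3"
  unfolding val_X_def
proof (rule Min_eqI)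
  let ?A = "{val_seq ground7 S |S. proper_seq Xex S}"
  have "?A \<subseteq> {3..7}"
    using val_proper proper_len by fastforce
  then show "finite ?A" using finite_subset by blast
  show "3 \<le> y" if "y \<in> ?A" for y using that val_proper proper_len by fastforce
  have P: "proper_seq Xex [{1,4,5},{2,4,5},{1,6,7},{1,2,3}]"
    unfolding proper_seq_def 
  proof (intro conjI allI impI)
    show "set [{1,4,5},{2,4,5},{1,6,7},{1::nat,2,3}] \<subseteq> Xex"
      by (simp only: Xex_def list.set insert_subset insert_iff simp_thms empty_subsetI)
    fix i assume "i < length [{1,4,5},{2,4,5},{1,6,7},{1::nat,2,3}]" "0 < i"
    then have "i = 1 \<or> i = 2 \<or> i = 3" by auto
    then show "\<not> [{1,4,5},{2,4,5},{1,6,7},{1::nat,2,3}] ! i \<subseteq> (\<Union>j<i. [{1,4,5},{2,4,5},{1,6,7},{1::nat,2,3}] ! j)"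
      by (elim disjE; simp only: UN1 UN2 UN3; simp)
  qed
  show "3 \<in> ?A" using val_proper[OF P] P by force
qed

lemma rankU: "matroid_rank U27 ground7 = 2"
  unfolding matroid_rank_def
proof (rule Max_eqI)
  let ?A = "{card B |B. B \<in> U27 \<and> B \<subseteq> ground7}"
  have "?A \<subseteq> {0..2}" unfolding U27_def by auto
  then show "finite ?A" using finite_subset by blast
  show "y \<le> 2" if "y \<in> ?A" for y using that unfolding U27_def by auto
  have "{1,2} \<in> U27 \<and> {1,2} \<subseteq> ground7" unfolding U27_def ground7_def by auto
  then show "2 \<in> ?A" by force
qed

theorem mainTheorem18:
  shows "minimal_X_matroid Xex U27
         \<and> (\<forall>N. minimal_X_matroid Xex N \<longrightarrow> N = U27)
         \<and> val_X Xex ground7 = 3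
         \<and> val_X Xex ground7 \<noteq> int (matroid_rank U27 ground7)"
proof (intro conjI allI impI)
  show "minimal_X_matroid Xex U27"
    unfolding minimal_X_matroid_def
  proof (intro conjI allI impI U27_X)
    fix N assume H: "X_matroid Xex N \<and> dep_le N U27"
    have "U27 \<subseteq> N"
    proof
      fix A assume A: "A \<in> U27"
      then have "A \<subseteq> ground7" unfolding U27_def by simp
      then show "A \<in> N" using H A unfolding dep_le_def dependent_def by blast
    qed
    moreover have "N \<subseteq> U27" using X_sub_U27 H by simp
    ultimately show "N = U27" by (rule subset_antisym[rotated])
  qed
  show "N = U27" if "minimal_X_matroid Xex N" for N
  proof -
    have XN: "X_matroid Xex N" using that unfolding minimal_X_matroid_def by blast
    have "dep_le U27 N" unfolding dep_le_def dependent_def using X_sub_U27[OF XN] by blast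
    then have "U27 = N" using that U27_X unfolding minimal_X_matroid_def by simp
    then show ?thesis by simp
  qed
  show "val_X Xex ground7 = 3" by (rule valX)
  show "val_X Xex ground7 \<noteq> int (matroid_rank U27 ground7)" using valX rankU by simp
qed

end
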